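(* Let $G$ be a $K_4$-free graph with $n$ vertices and $e$ edges, let $P$ be a greedy partition of $G$ with size $r=r(P)$, and let $r_2$ be the number of cliques of $P$ of size at least $2$. Then $e\le r(n-r)+r_2(n-r-r_2)$.
   Context: A good partition $P$ of $V(G)$ is a partition of $V(G)$ into disjoint sets $C_1, \dots, C_r$ (the cliques of $P$), each inducing a complete subgraph of $G$, indexed so that $|C_1|\le\dots\le |C_r|$; its size is $r(P)=r$. It is a greedy partition if for every $i\ge1$ the set $C_1\cup\dots\cup C_i$ induces a subgraph with no complete subgraph on $|C_i|+1$ vertices. For $K_4$-free $G$, every clique of $P$ has size $1$, $2$ or $3$. *)

theory Defs
  imports Main
begin

text \<open>Simple graphs: a finite vertex set V with a symmetric, irreflexive
adjacency relation E (only its restriction to V matters).\<close>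

definition simple_graph :: "'a set \<Rightarrow> ('a \<Rightarrow> 'a \<Rightarrow> bool) \<Rightarrow> bool" where
  "simple_graph V E \<longleftrightarrow> finite V \<and> (\<forall>u v. E u v \<longrightarrow> E v u) \<and> (\<forall>v. \<not> E v v)"

definition edges :: "'a set \<Rightarrow> ('a \<Rightarrow> 'a \<Rightarrow> bool) \<Rightarrow> 'a set set" where
  "edges V E = {{u, v} | u v. u \<in> V \<and> v \<in> V \<and> E u v}"

definition is_clique :: "'a set \<Rightarrow> ('a \<Rightarrow> 'a \<Rightarrow> bool) \<Rightarrow> 'a set \<Rightarrow> bool" where
  "is_clique V E C \<longleftrightarrow> C \<subseteq> V \<and> (\<forall>u\<in>C. \<forall>v\<in>C. u \<noteq> v \<longrightarrow> E u v)"

definition Kfree :: "nat \<Rightarrow> 'a set \<Rightarrow> ('a \<Rightarrow> 'a \<Rightarrow> bool) \<Rightarrow> bool" where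
  "Kfree k V E \<longleftrightarrow> \<not> (\<exists>C. is_clique V E C \<and> card C = k \<and> finite C)"

definition good_partition :: "'a set \<Rightarrow> ('a \<Rightarrow> 'a \<Rightarrow> bool) \<Rightarrow> 'a set list \<Rightarrow> bool" where
  "good_partition V E P \<longleftrightarrow>
     (\<forall>C\<in>set P. C \<noteq> {} \<and> is_clique V E C) \<and>
     (\<forall>i<length P. \<forall>j<length P. i \<noteq> j \<longrightarrow> P ! i \<inter> P ! j = {}) \<and>
     \<Union>(set P) = V \<and>
     sorted (map card P)"

definition greedy_partition :: "'a set \<Rightarrow> ('a \<Rightarrow> 'a \<Rightarrow> bool) \<Rightarrow> 'a set list \<Rightarrow> bool" where
  "greedy_partition V E P \<longleftrightarrow> good_partition V E P \<and>
     (\<forall>i<length P. Kfree (card (P ! i) + 1) (\<Union>(set (take (Suc i) P))) E)"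

end

theory Submission
  imports Defs
begin

definition gval :: "'a set list \<Rightarrow> int" where
  "gval P = int (length P) * (int (sum_list (map card P)) - int (length P))
     + int (length (filter (\<lambda>C. card C \<ge> 2) P))
       * (int (sum_list (map card P)) - int (length P) - int (length (filter (\<lambda>C. card C \<ge> 2) P)))"

lemma count_lemma:
  "(\<forall>C\<in>set P. 1 \<le> card C \<and> card C \<le> 3) \<Longrightarrow>
   sum_list (map card P) = length P + length (filter (\<lambda>C. card C \<ge> 2) P)
      + length (filter (\<lambda>C. card C = 3) P)"
proof (induction P)
  case Nil
  then show ?case by simp
next
  case (Cons a P)
  then have "card a = 1 \<or> card a = 2 \<or> card a = 3" by auto
  with Cons show ?case by auto
qed

lemma cross_bound:
  assumes fV: "finite V'" and fC: "finite C"
    and nadj: "\<forall>u\<in>V'. \<exists>v\<in>C. \<not> E u v"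
  shows "card ((\<lambda>(u,v). {u,v}) ` (SIGMA u:V'. {v\<in>C. E u v})) \<le> card V' * (card C - 1)"
proof -
  have "card ((\<lambda>(u,v). {u,v}) ` (SIGMA u:V'. {v\<in>C. E u v})) \<le> card (SIGMA u:V'. {v\<in>C. E u v})"
    by (rule card_image_le) (use fV fC in auto)
  also have "\<dots> = (\<Sum>u\<in>V'. card {v\<in>C. E u v})"
    by (rule card_SigmaI) (use fV fC in auto)
  also have "\<dots> \<le> (\<Sum>u\<in>V'. card C - 1)"
  proof (rule sum_mono)
    fix u assume "u \<in> V'"
    then obtain v where "v \<in> C" "\<not> E u v" using nadj by auto
    then have "{v\<in>C. E u v} \<subset> C" by auto
    then have "card {v\<in>C. E u v} < card C" using fC by (rule psubset_card_mono[rotated])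
    then show "card {v\<in>C. E u v} \<le> card C - 1" by simp
  qed
  also have "\<dots> = card V' * (card C - 1)" by simp
  finally show ?thesis .
qed

lemma inner_bound:
  assumes fC: "finite C" and irr: "\<forall>v. \<not> E v v"
  shows "card (edges C E) \<le> card C choose 2"
proof -
  have "edges C E \<subseteq> {A. A \<subseteq> C \<and> card A = 2}"
    using irr unfolding edges_def by (auto simp: card_insert_if)
  then have "card (edges C E) \<le> card {A. A \<subseteq> C \<and> card A = 2}"
    by (rule card_mono[rotated]) (use fC in simp)
  also have "\<dots> = card C choose 2" using fC by (rule n_subsets)
  finally show ?thesis .
qed

lemma edges_finite: "finite V \<Longrightarrow> finite (edges V E)"
proof -
  assume "finite V"
  moreover have "edges V E \<subseteq> Pow V" unfolding edges_def by auto
  ultimately show ?thesis by (meson finite_Pow_iff finite_subset)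
qed

lemma main:
  assumes sym: "\<forall>u v. E u v \<longrightarrow> E v u" and irr: "\<forall>v. \<not> E v v"
  shows "(\<forall>C\<in>set P. C \<noteq> {} \<and> finite C \<and> card C \<le> 3) \<Longrightarrow>
    (\<forall>i<length P. \<forall>j<length P. i \<noteq> j \<longrightarrow> P!i \<inter> P!j = {}) \<Longrightarrow>
    sorted (map card P) \<Longrightarrow>
    (\<forall>i<length P. \<forall>u\<in>\<Union>(set (take i P)). \<exists>v\<in>P!i. \<not> E u v) \<Longrightarrow>
    card (\<Union>(set P)) = sum_list (map card P) \<and> int (card (edges (\<Union>(set P)) E)) \<le> gval P"
proof (induction P rule: rev_induct)
  case Nil
  then show ?case by (simp add: gval_def edges_def)
next
  case (snoc x xs)
  note H1 = snoc.prems(1) and H2 = snoc.prems(2) and H3 = snoc.prems(3) and H4 = snoc.prems(4)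
  have H1': "\<forall>C\<in>set xs. C \<noteq> {} \<and> finite C \<and> card C \<le> 3" using H1 by auto
  have H2': "\<forall>i<length xs. \<forall>j<length xs. i \<noteq> j \<longrightarrow> xs!i \<inter> xs!j = {}"
  proof (intro allI impI)
    fix i j assume "i < length xs" "j < length xs" "i \<noteq> j"
    then show "xs!i \<inter> xs!j = {}" using H2[rule_format, of i j] by (simp add: nth_append)
  qed
  have H3': "sorted (map card xs)" and H3x: "\<forall>D\<in>set xs. card D \<le> card x"
    using H3 by (auto simp: sorted_append)
  have H4': "\<forall>i<length xs. \<forall>u\<in>\<Union>(set (take i xs)). \<exists>v\<in>xs!i. \<not> E u v"
  proof (intro allI impI ballI)
    fix i u assume "i < length xs" "u \<in> \<Union>(set (take i xs))"
    then show "\<exists>v\<in>xs!i. \<not> E u v" using H4[rule_format, of i u] by (simp add: nth_append)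
  qed
  have nadj: "\<forall>u\<in>\<Union>(set xs). \<exists>v\<in>x. \<not> E u v"
    using H4[rule_format, of "length xs"] by simp
  from snoc.IH[OF H1' H2' H3' H4'] have IH1: "card (\<Union>(set xs)) = sum_list (map card xs)"
    and IH2: "int (card (edges (\<Union>(set xs)) E)) \<le> gval xs" by auto
  define V' where "V' = \<Union>(set xs)"
  have fV: "finite V'" using H1' unfolding V'_def by auto
  have fx: "finite x" and xne: "x \<noteq> {}" and x3: "card x \<le> 3" using H1 by auto
  have disj: "V' \<inter> x = {}"
  proof -
    { fix D assume "D \<in> set xs"
      then obtain j where j: "j < length xs" "D = xs!j" by (auto simp: in_set_conv_nth)
      then have "D \<inter> x = {}" using H2[rule_format, of j "length xs"] by (simp add: nth_append) }
    then show ?thesis unfolding V'_def by auto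
  qed
  have U: "\<Union>(set (xs @ [x])) = V' \<union> x" unfolding V'_def by auto
  have cardU: "card (V' \<union> x) = card V' + card x"
    using card_Un_disjoint[OF fV fx disj] .
  have incl: "edges (V' \<union> x) E \<subseteq> edges V' E \<union> edges x E \<union> (\<lambda>(u,v). {u,v}) ` (SIGMA u:V'. {v\<in>x. E u v})"
  proof
    fix A assume "A \<in> edges (V' \<union> x) E"
    then obtain u v where A: "A = {u,v}" "u \<in> V' \<union> x" "v \<in> V' \<union> x" "E u v"
      unfolding edges_def by auto
    show "A \<in> edges V' E \<union> edges x E \<union> (\<lambda>(u,v). {u,v}) ` (SIGMA u:V'. {v\<in>x. E u v})"
    proof (cases "u \<in> V'")
      case True
      show ?thesis
      proof (cases "v \<in> V'")
        case True
        then show ?thesis using \<open>u \<in> V'\<close> A unfolding edges_def by auto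
      next
        case False
        then have "v \<in> x" using A by auto
        then have "A \<in> (\<lambda>(u,v). {u,v}) ` (SIGMA u:V'. {v\<in>x. E u v})"
          using True A by (auto intro!: image_eqI[where x="(u,v)"])
        then show ?thesis by blast
      qed
    next
      case False
      then have ux: "u \<in> x" using A by auto
      show ?thesis
      proof (cases "v \<in> V'")
        case True
        have "E v u" using sym A by auto
        moreover have "A = {v,u}" using A by auto
        ultimately have "A \<in> (\<lambda>(u,v). {u,v}) ` (SIGMA u:V'. {v\<in>x. E u v})"
          using True ux by (auto intro!: image_eqI[where x="(v,u)"])
        then show ?thesis by blast
      next
        case False
        then have "v \<in> x" using A by auto
        then show ?thesis using ux A unfolding edges_def by auto
      qed
    qed
  qed
  have eb: "card (edges (V' \<union> x) E) \<le> card (edges V' E) + card V' * (card x - 1) + (card x choose 2)"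
  proof -
    have fin: "finite (edges (V' \<union> x) E \<union> edges x E \<union> (\<lambda>(u,v). {u,v}) ` (SIGMA u:V'. {v\<in>x. E u v}))"
      using fV fx by (auto intro!: edges_finite)
    have "card (edges (V' \<union> x) E) \<le> card (edges V' E \<union> edges x E \<union> (\<lambda>(u,v). {u,v}) ` (SIGMA u:V'. {v\<in>x. E u v}))"
      by (rule card_mono[OF _ incl]) (use fV fx in \<open>auto intro!: edges_finite\<close>)
    also have "\<dots> \<le> card (edges V' E) + card (edges x E) + card ((\<lambda>(u,v). {u,v}) ` (SIGMA u:V'. {v\<in>x. E u v}))"
      by (meson add_le_mono card_Un_le le_refl order_trans)
    also have "\<dots> \<le> card (edges V' E) + (card x choose 2) + card V' * (card x - 1)"
      using inner_bound[of x E, OF fx irr] cross_bound[OF fV fx nadj[folded V'_def]] by linarith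
    finally show ?thesis by linarith
  qed
  define n where "n = sum_list (map card xs)"
  define r where "r = length xs"
  define r2 where "r2 = length (filter (\<lambda>C. card C \<ge> 2) xs)"
  define c3 where "c3 = length (filter (\<lambda>C. card C = 3) xs)"
  define s where "s = card x"
  have pos: "\<forall>C\<in>set xs. 1 \<le> card C \<and> card C \<le> 3"
    using H1' by (auto simp: Suc_le_eq card_gt_0_iff)
  have nrc: "n = r + r2 + c3" using count_lemma[OF pos] unfolding n_def r_def r2_def c3_def by simp
  have s13: "s = 1 \<or> s = 2 \<or> s = 3" using x3 xne fx unfolding s_def
    by (metis card_0_eq le_SucE numeral_2_eq_2 numeral_3_eq_3 le_zero_eq One_nat_def)
  have s1: "s = 1 \<Longrightarrow> r2 = 0 \<and> c3 = 0"
  proof -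
    assume "s = 1"
    then have "\<forall>D\<in>set xs. card D \<le> 1" using H3x unfolding s_def by auto
    then show ?thesis unfolding r2_def c3_def by (auto simp: filter_empty_conv)
  qed
  have s2: "s = 2 \<Longrightarrow> c3 = 0"
  proof -
    assume "s = 2"
    then have "\<forall>D\<in>set xs. card D \<le> 2" using H3x unfolding s_def by auto
    then show ?thesis unfolding c3_def by (auto simp: filter_empty_conv)
  qed
  have gx: "gval xs = int r * (int n - int r) + int r2 * (int n - int r - int r2)"
    unfolding gval_def n_def r_def r2_def by simp
  have gxx: "gval (xs @ [x]) = int (r+1) * (int (n + s) - int (r+1))
      + int (r2 + (if s \<ge> 2 then 1 else 0)) * (int (n+s) - int (r+1) - int (r2 + (if s \<ge> 2 then 1 else 0)))"
    unfolding gval_def n_def r_def r2_def s_def by simp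
  have cV: "card V' = n" using IH1 unfolding V'_def n_def by simp
  have IH2': "int (card (edges V' E)) \<le> gval xs" using IH2 unfolding V'_def .
  have eb': "int (card (edges (V' \<union> x) E)) \<le> int (card (edges V' E)) + int n * (int s - 1) + int (s choose 2)"
    using eb cV s13 unfolding s_def by (auto simp: of_nat_diff)
  have "int (card (edges (V' \<union> x) E)) \<le> gval (xs @ [x])"
  proof -
    consider "s = 1" | "s = 2" | "s = 3" using s13 by blast
    then show ?thesis
    proof cases
      case 1
      have c0: "int (s choose 2) = 0" using 1 by (simp add: binomial_eq_0)
      have m0: "int n * (int s - 1) = 0" using 1 by simp
      have g0: "gval xs = 0" "gval (xs @ [x]) = 0" using 1 s1 nrc gx gxx by simp_all
      show ?thesis using c0 m0 g0 eb' IH2' by linarith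
    next
      case 2
      have "(2::nat) choose 2 = 1" by simp
      then show ?thesis using 2 s2 nrc eb' IH2' gx gxx by (simp add: algebra_simps)
    next
      case 3
      have "(3::nat) choose 2 = 3" by (simp add: numeral_3_eq_3 numeral_2_eq_2)
      then show ?thesis using 3 nrc eb' IH2' gx gxx by (simp add: algebra_simps)
    qed
  qed
  then show ?case using U cardU cV IH1 unfolding s_def n_def by simp
qed

theorem claim6:
  fixes V :: "'a set" and E :: "'a \<Rightarrow> 'a \<Rightarrow> bool" and P :: "'a set list"
  assumes "simple_graph V E"
    and "Kfree 4 V E"
    and "greedy_partition V E P"
  shows "int (card (edges V E)) \<le>
           int (length P) * (int (card V) - int (length P))
         + int (length (filter (\<lambda>C. card C \<ge> 2) P))
             * (int (card V) - int (length P) - int (length (filter (\<lambda>C. card C \<ge> 2) P)))"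
proof -
  have fin: "finite V" and sym: "\<forall>u v. E u v \<longrightarrow> E v u" and irr: "\<forall>v. \<not> E v v"
    using assms(1) unfolding simple_graph_def by auto
  have gp: "good_partition V E P" and kf: "\<forall>i<length P. Kfree (card (P ! i) + 1) (\<Union>(set (take (Suc i) P))) E"
    using assms(3) unfolding greedy_partition_def by auto
  have cl: "\<forall>C\<in>set P. C \<noteq> {} \<and> is_clique V E C" and dj: "\<forall>i<length P. \<forall>j<length P. i \<noteq> j \<longrightarrow> P ! i \<inter> P ! j = {}"
    and UV: "\<Union>(set P) = V" and so: "sorted (map card P)"
    using gp unfolding good_partition_def by auto
  have A1: "\<forall>C\<in>set P. C \<noteq> {} \<and> finite C \<and> card C \<le> 3"
  proof
    fix C assume C: "C \<in> set P"
    then have ne: "C \<noteq> {}" and cq: "is_clique V E C" using cl by auto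
    then have sub: "C \<subseteq> V" unfolding is_clique_def by auto
    then have fC: "finite C" using fin finite_subset by blast
    have "card C \<le> 3"
    proof (rule ccontr)
      assume "\<not> card C \<le> 3"
      then have "4 \<le> card C" by simp
      then obtain D where D: "D \<subseteq> C" "card D = 4" "finite D" by (rule obtain_subset_with_card_n)
      have "is_clique V E D" using cq D(1) unfolding is_clique_def by (meson subset_trans subsetD)
      then have "\<exists>C. is_clique V E C \<and> card C = 4 \<and> finite C" using D by blast
      then show False using assms(2) unfolding Kfree_def by simp
    qed
    then show "C \<noteq> {} \<and> finite C \<and> card C \<le> 3" using ne fC by blast
  qed
  have A4: "\<forall>i<length P. \<forall>u\<in>\<Union>(set (take i P)). \<exists>v\<in>P!i. \<not> E u v"
  proof (intro allI impI ballI)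
    fix i u assume i: "i < length P" and u: "u \<in> \<Union>(set (take i P))"
    show "\<exists>v\<in>P!i. \<not> E u v"
    proof (rule ccontr)
      assume "\<not> (\<exists>v\<in>P!i. \<not> E u v)"
      then have adj: "\<forall>v\<in>P!i. E u v" by blast
      obtain D where D: "D \<in> set (take i P)" "u \<in> D" using u by blast
      then obtain j where j: "j < length (take i P)" "D = take i P ! j" by (auto simp: in_set_conv_nth)
      then have jj: "j < i" "D = P ! j" using i by auto
      have unot: "u \<notin> P ! i" using dj[rule_format, of j i] jj D(2) i by auto
      have Pi: "P ! i \<in> set P" using i by simp
      have cqi: "is_clique V E (P ! i)" using cl Pi by blast
      have fPi: "finite (P!i)" using A1 Pi by blast
      have tk: "take (Suc i) P = take i P @ [P ! i]" using i by (simp add: take_Suc_conv_app_nth)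
      let ?W = "\<Union>(set (take (Suc i) P))"
      have "is_clique ?W E (insert u (P ! i))"
        unfolding is_clique_def
      proof (intro conjI ballI impI)
        show "insert u (P ! i) \<subseteq> ?W" using tk D by auto
      next
        fix a b assume "a \<in> insert u (P ! i)" "b \<in> insert u (P ! i)" "a \<noteq> b"
        then show "E a b" using adj sym cqi unfolding is_clique_def by auto
      qed
      moreover have "card (insert u (P ! i)) = card (P ! i) + 1" using unot fPi by simp
      moreover have "finite (insert u (P ! i))" using fPi by simp
      ultimately have "\<exists>C. is_clique ?W E C \<and> card C = card (P ! i) + 1 \<and> finite C" by blast
      moreover have "Kfree (card (P ! i) + 1) ?W E" using kf i by blast
      ultimately show False unfolding Kfree_def by simp
    qed
  qed
  have mm: "card (\<Union>(set P)) = sum_list (map card P) \<and> int (card (edges (\<Union>(set P)) E)) \<le> gval P"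
    by (rule main[OF sym irr A1 dj so A4])
  then have m1: "card V = sum_list (map card P)"
    and m2: "int (card (edges V E)) \<le> gval P" unfolding UV by auto
  show ?thesis using m2 m1 unfolding gval_def by simp
qed

end
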